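(* Every prime number that is antipalindromic in base $3$ can be written as $6k+1$ for some $k\in\mathbb N$.
   Context: For an integer $b\ge 2$, every natural number $m$ has a unique base-$b$ expansion $m=a_nb^n+\dots+a_1b+a_0$ with $a_0,\dots,a_n\in\{0,1,\dots,b-1\}$ and $a_n\neq 0$. The number $m$ is antipalindromic in base $b$ if $a_j=b-1-a_{n-j}$ for all $j\in\{0,1,\dots,n\}$. $\mathbb N$ denotes the positive integers. *)

theory Defs
  imports Main "HOL-Computational_Algebra.Primes"
begin

definition digit :: "nat \<Rightarrow> nat \<Rightarrow> nat \<Rightarrow> nat" where
  "digit b m j = (m div b ^ j) mod b"

text \<open>m is antipalindromic in base b: m > 0 has leading index n
  (b^n <= m < b^(n+1), so a_n is nonzero) and a_j = b - 1 - a_(n-j) for all j <= n.\<close>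
definition antipalindromic :: "nat \<Rightarrow> nat \<Rightarrow> bool" where
  "antipalindromic b m \<longleftrightarrow>
     (\<exists>n. b ^ n \<le> m \<and> m < b ^ (n + 1) \<and>
          (\<forall>j\<le>n. digit b m j = b - 1 - digit b m (n - j)))"

end

theory Submission
  imports Defs
begin

theorem mainTheorem9:
  fixes p :: nat
  assumes "prime p" and "antipalindromic 3 p"
  shows "\<exists>k::nat. k \<ge> 1 \<and> p = 6 * k + 1"
proof -
  obtain n where n1: "3 ^ n \<le> p" and n2: "p < 3 ^ (n + 1)"
    and d: "\<forall>j\<le>n. digit 3 p j = 3 - 1 - digit 3 p (n - j)"
    using assms(2) unfolding antipalindromic_def by blast
  have q1: "p div 3 ^ n \<ge> 1" using n1 by (simp add: div_le_mono le_div_geq)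
  have q2: "p div 3 ^ n < 3" using n2 by (simp add: div_less_iff_less_mult mult.commute)
  have dn: "digit 3 p n = p div 3 ^ n" using q2 unfolding digit_def by simp
  have d0: "p mod 3 = 2 - p div 3 ^ n" using d[rule_format, of 0] dn unfolding digit_def by simp
  have m: "p mod 3 \<le> 1" using d0 q1 by simp
  have p3: "p \<noteq> 3"
  proof
    assume "p = 3"
    then have "n = 1" using n1 n2
      by (metis Suc_eq_plus1 Suc_lessI le_less_Suc_eq less_one not_less power_0 power_one_right
          power_strict_increasing_iff zero_less_numeral one_less_numeral_iff semiring_norm(77))
    then show False using d0 \<open>p = 3\<close> by simp
  qed
  have "p mod 3 \<noteq> 0"
  proof
    assume "p mod 3 = 0"
    then have "3 dvd p" by auto
    moreover have "\<forall>m. m dvd p \<longrightarrow> m = 1 \<or> m = p" using assms(1) prime_nat_iff by blast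
    ultimately have "(3::nat) = 1 \<or> 3 = p" by blast
    then show False using p3 by simp
  qed
  then have m1: "p mod 3 = 1" using m by simp
  have "p \<noteq> 2" using m1 by auto
  moreover have "p > 1" using assms(1) by (rule prime_gt_1_nat)
  ultimately have "p > 2" by simp
  then have "odd p" using assms(1) prime_odd_nat by simp
  then have "p mod 6 = 1" using m1 by presburger
  moreover have "p > 1" using \<open>p > 2\<close> by simp
  ultimately have "p = 6 * (p div 6) + 1" "p div 6 \<ge> 1" by presburger+
  then show ?thesis by blast
qed

end
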